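(* Let $k,a,b$ be positive real numbers. The $k$-FL sequence $\{S^{(a,b)}_{k,n}\}_{n\ge0}$ is a geometric sequence if and only if $a^2=(k^2+4)b^2$. In particular, given a positive real number $k$, there are infinitely many pairs $(a,b)$ such that $\{S^{(a,b)}_{k,n}\}_{n\ge0}$ is a geometric sequence.
   Context: The $k$-FL sequence (for positive reals $k,a,b$) is $S^{(a,b)}_{k,0}=2b$, $S^{(a,b)}_{k,1}=bk+a$, $S^{(a,b)}_{k,n}=kS^{(a,b)}_{k,n-1}+S^{(a,b)}_{k,n-2}$. *)

theory Defs
  imports Complex_Main
begin

fun kFL :: "real \<Rightarrow> real \<Rightarrow> real \<Rightarrow> nat \<Rightarrow> real" where
  "kFL k a b 0 = 2 * b"
| "kFL k a b (Suc 0) = b * k + a"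
| "kFL k a b (Suc (Suc n)) = k * kFL k a b (Suc n) + kFL k a b n"

definition geometric_seq :: "(nat \<Rightarrow> real) \<Rightarrow> bool" where
  "geometric_seq s \<longleftrightarrow> (\<exists>r. \<forall>n. s (Suc n) = r * s n)"

end

theory Submission
  imports Defs
begin

lemma geo_iff:
  fixes k a b :: real
  assumes "b > 0"
  shows "geometric_seq (kFL k a b) \<longleftrightarrow> a^2 = (k^2 + 4) * b^2"
proof
  assume "geometric_seq (kFL k a b)"
  then obtain r where r: "\<And>n. kFL k a b (Suc n) = r * kFL k a b n"
    unfolding geometric_seq_def by blast
  have e1: "b*k + a = r * (2*b)" using r[of 0] by simp
  have e2: "k * (b*k+a) + 2*b = r * (b*k+a)" using r[of 1] by simp
  have "2*b*(r^2) = 2*b*(k*r+1)" using e1 e2 by (simp add: power2_eq_square algebra_simps)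
  hence rr: "r^2 = k*r+1" using assms by simp
  have a: "a = 2*b*r - b*k" using e1 by (simp add: algebra_simps)
  have "a^2 = 4*b^2*r^2 - 4*b^2*k*r + b^2*k^2" unfolding a by (simp add: power2_eq_square algebra_simps)
  also have "... = (k^2+4)*b^2" unfolding rr by (simp add: algebra_simps)
  finally show "a^2 = (k^2 + 4) * b^2" .
next
  assume h: "a^2 = (k^2 + 4) * b^2"
  define r where "r = (b*k+a)/(2*b)"
  have e1: "b*k + a = r * (2*b)" using assms unfolding r_def by simp
  have a: "a = 2*b*r - b*k" using e1 by (simp add: algebra_simps)
  have "4*b^2*r^2 - 4*b^2*k*r + b^2*k^2 = (k^2+4)*b^2"
    using h unfolding a by (simp add: power2_eq_square algebra_simps)
  hence "4*b^2*(r^2 - k*r - 1) = 0" by (simp add: algebra_simps)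
  hence rr: "r^2 = k*r+1" using assms by simp
  have "\<forall>m. kFL k a b (Suc m) = r * kFL k a b m \<and> kFL k a b (Suc (Suc m)) = r * kFL k a b (Suc m)"
  proof
    fix m show "kFL k a b (Suc m) = r * kFL k a b m \<and> kFL k a b (Suc (Suc m)) = r * kFL k a b (Suc m)"
    proof (induction m)
      case 0
      have "kFL k a b 2 = k*(r*(2*b)) + 2*b" using e1 by (simp add: numeral_2_eq_2)
      also have "... = 2*b*(k*r+1)" by (simp add: algebra_simps)
      also have "... = 2*b*r^2" using rr by simp
      also have "... = r*(r*(2*b))" by (simp add: power2_eq_square)
      finally show ?case using e1 by (simp add: numeral_2_eq_2)
    next
      case (Suc m)
      have "kFL k a b (Suc (Suc (Suc m))) = k * kFL k a b (Suc (Suc m)) + kFL k a b (Suc m)" by simp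
      also have "... = (k*r+1) * kFL k a b (Suc m)"
      proof -
        have q: "kFL k a b (Suc (Suc m)) = r * kFL k a b (Suc m)" using Suc by blast
        show ?thesis unfolding q by (simp add: algebra_simps)
      qed
      also have "... = r^2 * kFL k a b (Suc m)" using rr by simp
      also have "... = r * (r * kFL k a b (Suc m))" by (simp add: power2_eq_square)
      also have "... = r * kFL k a b (Suc (Suc m))"
        using conjunct2[OF Suc] by (metis mult.assoc)
      finally have "kFL k a b (Suc (Suc (Suc m))) = r * kFL k a b (Suc (Suc m))" .
      with conjunct2[OF Suc] show ?case by blast
    qed
  qed
  thus "geometric_seq (kFL k a b)" unfolding geometric_seq_def by blast
qed

theorem corollary4p20:
  fixes k :: real
  assumes "k > 0"
  shows "(\<forall>a b. a > 0 \<longrightarrow> b > 0 \<longrightarrow>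
            (geometric_seq (kFL k a b) \<longleftrightarrow> a^2 = (k^2 + 4) * b^2))
         \<and> infinite {(a, b). a > 0 \<and> b > 0 \<and> geometric_seq (kFL k a b)}"
proof
  show "\<forall>a b. a > 0 \<longrightarrow> b > 0 \<longrightarrow>
            (geometric_seq (kFL k a b) \<longleftrightarrow> a^2 = (k^2 + 4) * b^2)"
    using geo_iff by blast
  define c where "c = sqrt (k^2+4)"
  have c: "c > 0" "c^2 = k^2+4" unfolding c_def by (auto simp: add_nonneg_pos)
  have sub: "(\<lambda>b. (c*b, b)) ` {0<..} \<subseteq> {(a, b). a > 0 \<and> b > 0 \<and> geometric_seq (kFL k a b)}"
  proof clarsimp
    fix b :: real assume "b > 0"
    thus "0 < c*b \<and> geometric_seq (kFL k (c*b) b)" using c geo_iff[of b k "c*b"]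
      by (simp add: power_mult_distrib)
  qed
  have "inj_on (\<lambda>b. (c*b, b)) ({0<..} :: real set)" by (auto simp: inj_on_def)
  moreover have "infinite ({0<..} :: real set)" by (simp add: infinite_Ioi)
  ultimately have "infinite ((\<lambda>b. (c*b, b)) ` ({0<..} :: real set))" using finite_imageD by blast
  thus "infinite {(a, b). a > 0 \<and> b > 0 \<and> geometric_seq (kFL k a b)}"
    using sub finite_subset by blast
qed

end
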